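(* Let $n\ge1$ and $\sigma\in\mathfrak{S}_n$. Then $\Delta(\sigma')\sqsubset\Delta(\sigma)$. Moreover: if $\Delta(\sigma')$ is a prefix of $\Delta(\sigma)$, then $\sigma$ is obtained from $\sigma'$ by inserting $n$ in the last position. Otherwise, let $k$ be the index of the first step at which the paths $\Delta(\sigma')$ and $\Delta(\sigma)$ differ; if $k$ is odd, $\sigma$ is obtained from $\sigma'$ by inserting $n$ immediately after the letter $\frac{k+1}{2}$, and if $k$ is even, $\sigma$ is obtained from $\sigma'$ by inserting $n$ immediately before the letter $\frac{k}{2}$.
   Context: Permutations $\sigma\in\mathfrak{S}_n$ are written as words $\sigma_1\cdots\sigma_n$, with the conventions $\sigma_0=0$, $\sigma_{n+1}=n+1$. A value $\sigma_i$ ($1\le i\le n$) is a peak if $\sigma_{i-1}<\sigma_i>\sigma_{i+1}$, a valley if $\sigma_{i-1}>\sigma_i<\sigma_{i+1}$, a double ascent if $\sigma_{i-1}<\sigma_i<\sigma_{i+1}$, a double descent if $\sigma_{i-1}>\sigma_i>\sigma_{i+1}$. The profile $\Delta(\sigma)$ is the word $w_1\cdots w_{2n}$ over $\{\nearrow,\searrow\}$ where, for each value $j\in\{1,\dots,n\}$, $w_{2j-1}w_{2j}$ is $\nearrow\nearrow$ if $j$ is a valley, $\searrow\searrow$ if $j$ is a peak, $\nearrow\searrow$ if $j$ is a double ascent, $\searrow\nearrow$ if $j$ is a double descent; it is a Dyck path of length $2n$ (the empty permutation has the empty profile). $\sigma'\in\mathfrak{S}_{n-1}$ is the word obtained from $\sigma$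 by deleting the letter $n$. A Dyck path of length $2m$ is a lattice path from $(0,0)$ to $(2m,0)$ with steps $\nearrow=(1,1)$, $\searrow=(1,-1)$ never going below the $x$-axis; $P(x)$ denotes its height at abscissa $x$. A cell is a point $(a,b)\in\mathbb{Z}^2$ with $b\ge0$, $a+b$ even (the tilted square with vertices $(a,b),(a+1,b\pm1),(a+2,b)$). The Dyck shape of $P$ (length $2m$) is $S(P)=\{(a,b): b\ge0,\ a+b\text{ even},\ 0\le a\le 2m-2,\ b+1\le P(a+1)\}$. Cells are adjacent if they differ by $(\pm1,\pm1)$. A ribbon is a nonempty set of cells, connected for adjacency, containing no four cells $(a,b),(a+1,b+1),(a+1,b-1),(a+2,b)$. For Dyck paths $D$ of length $2m$ and $E$ of length $2m+2$, $D\sqsubset E$ means $S(D)\subseteq S(E)$ and $S(E)\setminus S(D)$ is a ribbon. *)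

theory Defs
  imports Main "HOL-Library.Sublist"
begin

definition is_perm :: "nat \<Rightarrow> nat list \<Rightarrow> bool" where
  "is_perm n s \<longleftrightarrow> distinct s \<and> set s = {1..n}"

definition letter :: "nat list \<Rightarrow> nat \<Rightarrow> nat" where
  "letter s i = (if i = 0 then 0 else if i = length s + 1 then length s + 1 else s ! (i - 1))"

definition pos :: "nat list \<Rightarrow> nat \<Rightarrow> nat" where
  "pos s j = (THE i. 1 \<le> i \<and> i \<le> length s \<and> s ! (i - 1) = j)"

definition is_peak :: "nat list \<Rightarrow> nat \<Rightarrow> bool" where
  "is_peak s j = (let i = pos s j in letter s (i - 1) < letter s i \<and> letter s i > letter s (i + 1))"
definition is_valley :: "nat list \<Rightarrow> nat \<Rightarrow> bool" where
  "is_valley s j = (let i = pos s j in letter s (i - 1) > letter s i \<and> letter s i < letter s (i + 1))"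
definition is_dasc :: "nat list \<Rightarrow> nat \<Rightarrow> bool" where
  "is_dasc s j = (let i = pos s j in letter s (i - 1) < letter s i \<and> letter s i < letter s (i + 1))"
definition is_ddesc :: "nat list \<Rightarrow> nat \<Rightarrow> bool" where
  "is_ddesc s j = (let i = pos s j in letter s (i - 1) > letter s i \<and> letter s i > letter s (i + 1))"

datatype step = Up | Down

definition steps_of :: "nat list \<Rightarrow> nat \<Rightarrow> step list" where
  "steps_of s j =
     (if is_valley s j then [Up, Up]
      else if is_peak s j then [Down, Down]
      else if is_dasc s j then [Up, Down]
      else [Down, Up])"

definition profile :: "nat list \<Rightarrow> step list" where
  "profile s = concat (map (steps_of s) [1..<length s + 1])"

definition step_val :: "step \<Rightarrow> int" where
  "step_val st = (if st = Up then 1 else -1)"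

definition height :: "step list \<Rightarrow> int \<Rightarrow> int" where
  "height P x = sum_list (map step_val (take (nat x) P))"

definition dyck :: "step list \<Rightarrow> bool" where
  "dyck P \<longleftrightarrow> even (length P) \<and> (\<forall>x\<le>length P. height P (int x) \<ge> 0) \<and> height P (int (length P)) = 0"

type_synonym cell = "int \<times> int"

definition dyck_shape :: "step list \<Rightarrow> cell set" where
  "dyck_shape P = {(a, b). b \<ge> 0 \<and> even (a + b) \<and> 0 \<le> a \<and> a \<le> int (length P) - 2
                       \<and> b + 1 \<le> height P (a + 1)}"

definition adjacent :: "cell \<Rightarrow> cell \<Rightarrow> bool" where
  "adjacent c d \<longleftrightarrow> \<bar>fst c - fst d\<bar> = 1 \<and> \<bar>snd c - snd d\<bar> = 1"

definition cell_connected :: "cell set \<Rightarrow> bool" where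
  "cell_connected R \<longleftrightarrow>
     (\<forall>c\<in>R. \<forall>d\<in>R. (c, d) \<in> {(x, y). x \<in> R \<and> y \<in> R \<and> adjacent x y}\<^sup>*)"

definition is_cell :: "cell \<Rightarrow> bool" where
  "is_cell c \<longleftrightarrow> snd c \<ge> 0 \<and> even (fst c + snd c)"

definition ribbon :: "cell set \<Rightarrow> bool" where
  "ribbon R \<longleftrightarrow> R \<noteq> {} \<and> (\<forall>c\<in>R. is_cell c) \<and> cell_connected R \<and>
     \<not> (\<exists>a b. (a, b) \<in> R \<and> (a + 1, b + 1) \<in> R \<and> (a + 1, b - 1) \<in> R \<and> (a + 2, b) \<in> R)"

definition ribbon_sub :: "step list \<Rightarrow> step list \<Rightarrow> bool" where
  "ribbon_sub D E \<longleftrightarrow> dyck D \<and> dyck E \<and> length E = length D + 2 \<and>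
     dyck_shape D \<subseteq> dyck_shape E \<and> ribbon (dyck_shape E - dyck_shape D)"

definition first_diff :: "step list \<Rightarrow> step list \<Rightarrow> nat" where
  "first_diff D E = (LEAST k. 1 \<le> k \<and> k \<le> length D \<and> k \<le> length E \<and> D ! (k - 1) \<noteq> E ! (k - 1))"

end

theory Submission
  imports Defs
begin

definition stepc :: "bool \<Rightarrow> step" where "stepc b = (if b then Up else Down)"

lemma pos_split: assumes "distinct (p @ j # q)" shows "pos (p @ j # q) j = Suc (length p)"
  unfolding pos_def
proof (rule the_equality)
  show "1 \<le> Suc (length p) \<and> Suc (length p) \<le> length (p @ j # q) \<and> (p @ j # q) ! (Suc (length p) - 1) = j"
    by (simp add: nth_append)
next
  fix i assume i: "1 \<le> i \<and> i \<le> length (p @ j # q) \<and> (p @ j # q) ! (i - 1) = j"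
  have "(p @ j # q) ! (i - 1) = (p @ j # q) ! (length p)" using i by (simp add: nth_append)
  moreover have "i - 1 < length (p @ j # q)" using i by auto
  ultimately have "i - 1 = length p" using nth_eq_iff_index_eq[OF assms, of "i - 1" "length p"] by simp
  thus "i = Suc (length p)" using i by auto
qed

lemma steps_gen:
  fixes l j r :: nat
  assumes "l \<noteq> j" "r \<noteq> j"
  shows "(if j < l \<and> j < r then [Up, Up] else if l < j \<and> r < j then [Down, Down]
          else if l < j \<and> j < r then [Up, Down] else [Down, Up]) = [stepc (j < r), stepc (j < l)]"
  using assms by (cases "j < l"; cases "j < r") (auto simp: stepc_def)

lemma steps_split:
  assumes d: "distinct (p @ j # q)" and j: "0 < j" "j \<le> length (p @ j # q)"
  shows "steps_of (p @ j # q) j =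
    [stepc (j < (if q = [] then Suc (length (p @ j # q)) else hd q)),
     stepc (j < (if p = [] then 0 else last p))]"
proof -
  let ?s = "p @ j # q"
  let ?L = "(if p = [] then 0 else last p)"
  let ?R = "(if q = [] then Suc (length ?s) else hd q)"
  have ps: "pos ?s j = Suc (length p)" using pos_split[OF d] .
  have l1: "letter ?s (Suc (length p) - 1) = ?L"
    by (cases p rule: rev_cases) (auto simp: letter_def nth_append)
  have l2: "letter ?s (Suc (length p)) = j" by (simp add: letter_def nth_append)
  have l3: "letter ?s (Suc (length p) + 1) = ?R"
    by (cases q) (auto simp: letter_def nth_append)
  have n1: "?L \<noteq> j" using d j by (cases p rule: rev_cases) auto
  have n2: "?R \<noteq> j" using d j by (cases q) auto
  have "steps_of ?s j = (if j < ?L \<and> j < ?R then [Up, Up] else if ?L < j \<and> ?R < j then [Down, Down]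
          else if ?L < j \<and> j < ?R then [Up, Down] else [Down, Up])"
    unfolding steps_of_def is_valley_def is_peak_def is_dasc_def Let_def ps l1 l2 l3 by (rule refl)
  also have "\<dots> = [stepc (j < ?R), stepc (j < ?L)]" by (rule steps_gen[OF n1 n2])
  finally show ?thesis .
qed

definition hgt :: "step list \<Rightarrow> nat \<Rightarrow> int" where
  "hgt P x = sum_list (map step_val (take x P))"

lemma height_nat: "height P (int x) = hgt P x"
  by (simp add: height_def hgt_def)

lemma height_nat1: "height P (int x + 1) = hgt P (Suc x)"
proof -
  have "int x + 1 = int (Suc x)" by simp
  thus ?thesis by (simp only: height_nat)
qed

lemma hgt_parity: "x \<le> length P \<Longrightarrow> even (hgt P x - int x)"
proof (induction P arbitrary: x)
  case Nil thus ?case by (simp add: hgt_def)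
next
  case (Cons st P)
  show ?case
  proof (cases x)
    case 0 thus ?thesis by (simp add: hgt_def)
  next
    case (Suc y)
    have "even (hgt P y - int y)" using Cons Suc by auto
    moreover have "hgt (st # P) x = step_val st + hgt P y" using Suc by (simp add: hgt_def)
    ultimately show ?thesis using Suc by (auto simp: step_val_def)
  qed
qed

lemma hgt_step: "x < length P \<Longrightarrow> \<bar>hgt P (Suc x) - hgt P x\<bar> = 1"
  by (simp add: hgt_def take_Suc_conv_app_nth step_val_def)

lemma length_steps_of[simp]: "length (steps_of s j) = 2"
  by (simp add: steps_of_def)

lemma length_profile: "length (profile s) = 2 * length s"
proof -
  have "length (profile s) = of_nat (length [1..<length s + 1]) * 2"
    by (simp only: profile_def length_concat map_map comp_def length_steps_of sum_list_triv)
  thus ?thesis by (simp del: upt_Suc)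
qed

lemma concat_upd:
  assumes j0: "1 \<le> j0" "j0 \<le> m" and c: "c < (2::nat)"
    and len: "\<And>j. length (g j) = 2"
    and same: "\<And>j. 1 \<le> j \<Longrightarrow> j \<le> m \<Longrightarrow> j \<noteq> j0 \<Longrightarrow> f j = g j"
    and fj0: "f j0 = (g j0)[c := x]"
  shows "concat (map f [1..<m+1]) = (concat (map g [1..<m+1]))[2*(j0-1)+c := x] \<and>
         concat (map g [1..<m+1]) ! (2*(j0-1)+c) = g j0 ! c"
proof -
  have sp: "[1..<m+1] = [1..<j0] @ j0 # [Suc j0..<m+1]"
  proof -
    have "[1..<m+1] = [1..<j0] @ [j0..<m+1]"
      using upt_add_eq_append[of 1 j0 "m + 1 - j0"] j0 by simp
    also have "[j0..<m+1] = j0 # [Suc j0..<m+1]" using j0 upt_conv_Cons by simp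
    finally show ?thesis .
  qed
  have A: "map f [1..<j0] = map g [1..<j0]" using same j0 by auto
  have B: "map f [Suc j0..<m+1] = map g [Suc j0..<m+1]" using same j0 by auto
  have LA: "length (concat (map g [1..<j0])) = 2*(j0-1)"
    by (simp add: length_concat sum_list_triv comp_def len)
  show ?thesis unfolding sp map_append list.map concat_append concat.simps A B
    using LA fj0 c len[of j0]
    by (simp add: list_update_append nth_append)
qed

lemma chain:
  assumes st: "\<And>a. i \<le> a \<Longrightarrow> a < m \<Longrightarrow> (f a, f (Suc a)) \<in> r \<and> (f (Suc a), f a) \<in> r"
  shows "i \<le> a \<Longrightarrow> a \<le> a' \<Longrightarrow> a' \<le> m \<Longrightarrow> (f a, f a') \<in> r\<^sup>* \<and> (f a', f a) \<in> r\<^sup>*"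
proof (induction a')
  case 0 thus ?case by auto
next
  case (Suc a')
  show ?case
  proof (cases "a = Suc a'")
    case True thus ?thesis by auto
  next
    case False
    hence "a \<le> a'" using Suc by auto
    hence IH: "(f a, f a') \<in> r\<^sup>* \<and> (f a', f a) \<in> r\<^sup>*" using Suc by auto
    have "(f a', f (Suc a')) \<in> r \<and> (f (Suc a'), f a') \<in> r" using st[of a'] Suc \<open>a \<le> a'\<close> by auto
    thus ?thesis using IH by (meson converse_rtrancl_into_rtrancl rtrancl_into_rtrancl)
  qed
qed

lemma abstract:
  assumes dD: "dyck D" and lE: "length E = length D + 2" and iD: "i \<le> length D"
    and eq1: "\<And>x. x \<le> i \<Longrightarrow> hgt E x = hgt D x"
    and eq2: "\<And>x. i < x \<Longrightarrow> x \<le> length D \<Longrightarrow> hgt E x = hgt D x + 2"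
    and e1: "hgt E (Suc (length D)) = 1" and e2: "hgt E (Suc (Suc (length D))) = 0"
  shows "ribbon_sub D E"
proof -
  define m where "m = length D"
  have evm: "even m" and nn: "\<And>x. x \<le> m \<Longrightarrow> hgt D x \<ge> 0" and z: "hgt D m = 0"
    using dD unfolding dyck_def m_def height_nat by auto
  have ge: "\<And>x. x \<le> m \<Longrightarrow> hgt E x \<ge> hgt D x"
  proof -
    fix x assume "x \<le> m"
    show "hgt E x \<ge> hgt D x"
    proof (cases "x \<le> i")
      case True thus ?thesis using eq1 by simp
    next
      case False thus ?thesis using eq2[of x] \<open>x \<le> m\<close> m_def by simp
    qed
  qed
  have Hpos: "\<And>x. x \<le> length E \<Longrightarrow> hgt E x \<ge> 0"
  proof -
    fix x assume "x \<le> length E"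
    hence "x \<le> m \<or> x = Suc m \<or> x = Suc (Suc m)" using lE m_def by auto
    thus "hgt E x \<ge> 0"
    proof (elim disjE)
      assume "x \<le> m" thus ?thesis using ge[of x] nn[of x] by linarith
    qed (use e1 e2 m_def in auto)
  qed
  have dE: "dyck E" unfolding dyck_def height_nat
    using Hpos e2 lE evm m_def by auto
  have sub: "dyck_shape D \<subseteq> dyck_shape E"
  proof
    fix c assume "c \<in> dyck_shape D"
    then obtain a b where c: "c = (a, b)" and b0: "b \<ge> 0" and ev: "even (a + b)" and a0: "0 \<le> a"
      and am: "a \<le> int m - 2" and hb: "b + 1 \<le> height D (a + 1)"
      unfolding dyck_shape_def m_def by auto
    obtain a' where a': "a = int a'" using a0 nonneg_eq_int by blast
    have "b + 1 \<le> hgt D (Suc a')" using hb a' height_nat1 by simp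
    also have "\<dots> \<le> hgt E (Suc a')" using ge am a' by auto
    finally show "c \<in> dyck_shape E" unfolding dyck_shape_def using c b0 ev a0 am lE m_def a' height_nat1
      by auto
  qed
  define f where "f = (\<lambda>a::nat. (int a, hgt E (Suc a) - 1))"
  define C where "C = f ` {i..m}"
  have Hge1: "\<And>a. i \<le> a \<Longrightarrow> a \<le> m \<Longrightarrow> hgt E (Suc a) \<ge> 1"
  proof -
    fix a assume "i \<le> a" "a \<le> m"
    show "hgt E (Suc a) \<ge> 1"
    proof (cases "Suc a \<le> m")
      case True thus ?thesis using eq2[of "Suc a"] nn[of "Suc a"] \<open>i \<le> a\<close> m_def by auto
    next
      case False hence "a = m" using \<open>a \<le> m\<close> by simp
      thus ?thesis using e1 m_def by simp
    qed
  qed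
  have par: "\<And>a. a \<le> m \<Longrightarrow> even (hgt E (Suc a) - int (Suc a))"
    using hgt_parity lE m_def by auto
  have diff: "dyck_shape E - dyck_shape D = C"
  proof
    show "dyck_shape E - dyck_shape D \<subseteq> C"
    proof
      fix c assume cin: "c \<in> dyck_shape E - dyck_shape D"
      then obtain a b where c: "c = (a, b)" and b0: "b \<ge> 0" and ev: "even (a + b)" and a0: "0 \<le> a"
        and am: "a \<le> int m" and hb: "b + 1 \<le> height E (a + 1)"
        unfolding dyck_shape_def m_def using lE by auto
      obtain a' where a': "a = int a'" using a0 nonneg_eq_int by blast
      have am': "a' \<le> m" using am a' by auto
      have hb': "b + 1 \<le> hgt E (Suc a')" using hb a' height_nat1 by simp
      have notD: "\<not> (int a' \<le> int m - 2 \<and> b + 1 \<le> hgt D (Suc a'))"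
        using cin c b0 ev a' height_nat1 unfolding dyck_shape_def m_def by auto
      have ia: "i \<le> a'"
      proof (rule ccontr)
        assume "\<not> i \<le> a'"
        hence e: "hgt E (Suc a') = hgt D (Suc a')" using eq1 by auto
        show False
        proof (cases "Suc a' = m")
          case True thus False using e z hb' b0 by auto
        next
          case False
          hence "int a' \<le> int m - 2" using \<open>\<not> i \<le> a'\<close> iD m_def by auto
          thus False using notD e hb' by auto
        qed
      qed
      have low: "b \<ge> hgt E (Suc a') - 2"
      proof (cases "int a' \<le> int m - 2")
        case True
        hence "hgt E (Suc a') = hgt D (Suc a') + 2" using eq2[of "Suc a'"] ia m_def by auto
        thus ?thesis using notD True by auto
      next
        case False
        hence "Suc a' = m \<or> a' = m" using am' by auto
        thus ?thesis
        proof
          assume "Suc a' = m"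
          hence "hgt E (Suc a') = 2" using eq2[of "Suc a'"] ia z m_def by auto
          thus ?thesis using b0 by auto
        next
          assume "a' = m" thus ?thesis using e1 b0 m_def by auto
        qed
      qed
      have pa: "even (hgt E (Suc a') - int (Suc a'))" using par am' by auto
      have "b = hgt E (Suc a') - 1"
      proof -
        have "b = hgt E (Suc a') - 2 \<or> b = hgt E (Suc a') - 1" using low hb' by auto
        moreover have "b \<noteq> hgt E (Suc a') - 2"
        proof
          assume "b = hgt E (Suc a') - 2"
          hence "even (int a' + hgt E (Suc a') - 2)" using ev a' by simp
          with pa show False by presburger
        qed
        ultimately show ?thesis by auto
      qed
      thus "c \<in> C" unfolding C_def f_def using c a' ia am' by auto
    qed
  next
    show "C \<subseteq> dyck_shape E - dyck_shape D"
    proof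
      fix c assume "c \<in> C"
      then obtain a where c: "c = f a" and ia: "i \<le> a" and am: "a \<le> m" unfolding C_def by auto
      have h1: "hgt E (Suc a) \<ge> 1" using Hge1 ia am .
      have pa: "even (hgt E (Suc a) - int (Suc a))" using par am by auto
      have inE: "c \<in> dyck_shape E" unfolding c f_def dyck_shape_def using h1 pa am lE m_def height_nat1
        by auto
      have notD: "c \<notin> dyck_shape D"
      proof
        assume "c \<in> dyck_shape D"
        hence "int a \<le> int m - 2" and "hgt E (Suc a) - 1 + 1 \<le> hgt D (Suc a)"
          using height_nat1[of D a] unfolding c f_def dyck_shape_def m_def by auto
        moreover have "hgt E (Suc a) = hgt D (Suc a) + 2" using eq2[of "Suc a"] ia calculation(1) m_def by auto
        ultimately show False by auto
      qed
      show "c \<in> dyck_shape E - dyck_shape D" using inE notD by auto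
    qed
  qed
  have cells: "\<And>c. c \<in> C \<Longrightarrow> is_cell c"
  proof -
    fix c assume "c \<in> C"
    then obtain a where c: "c = f a" and ia: "i \<le> a" and am: "a \<le> m" unfolding C_def by auto
    have h1: "hgt E (Suc a) \<ge> 1" using Hge1 ia am .
    have pa: "even (hgt E (Suc a) - int (Suc a))" using par am by auto
    show "is_cell c" unfolding is_cell_def c f_def using h1 pa by auto
  qed
  define r where "r = {(x, y). x \<in> C \<and> y \<in> C \<and> adjacent x y}"
  have st: "\<And>a. i \<le> a \<Longrightarrow> a < m \<Longrightarrow> (f a, f (Suc a)) \<in> r \<and> (f (Suc a), f a) \<in> r"
  proof -
    fix a assume "i \<le> a" "a < m"
    have inC: "f a \<in> C" "f (Suc a) \<in> C" unfolding C_def using \<open>i \<le> a\<close> \<open>a < m\<close> by auto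
    have "\<bar>hgt E (Suc (Suc a)) - hgt E (Suc a)\<bar> = 1" using hgt_step[of "Suc a" E] lE m_def \<open>a < m\<close> by auto
    hence "adjacent (f a) (f (Suc a)) \<and> adjacent (f (Suc a)) (f a)" unfolding adjacent_def f_def by auto
    thus "(f a, f (Suc a)) \<in> r \<and> (f (Suc a), f a) \<in> r" unfolding r_def using inC by auto
  qed
  have conn: "cell_connected C" unfolding cell_connected_def r_def[symmetric]
  proof (intro ballI)
    fix c d assume "c \<in> C" "d \<in> C"
    then obtain a a' where c: "c = f a" "i \<le> a" "a \<le> m" and d: "d = f a'" "i \<le> a'" "a' \<le> m"
      unfolding C_def by auto
    show "(c, d) \<in> r\<^sup>*"
    proof (cases "a \<le> a'")
      case True thus ?thesis using chain[of i m f r a a', OF st] c d by auto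
    next
      case False thus ?thesis using chain[of i m f r a' a, OF st] c d by auto
    qed
  qed
  have nodia: "\<not> (\<exists>a b. (a, b) \<in> C \<and> (a + 1, b + 1) \<in> C \<and> (a + 1, b - 1) \<in> C \<and> (a + 2, b) \<in> C)"
  proof
    assume "\<exists>a b. (a, b) \<in> C \<and> (a + 1, b + 1) \<in> C \<and> (a + 1, b - 1) \<in> C \<and> (a + 2, b) \<in> C"
    then obtain a b where "(a + 1, b + 1) \<in> C" "(a + 1, b - 1) \<in> C" by blast
    then obtain x y where "(a + 1, b + 1) = f x" "(a + 1, b - 1) = f y" unfolding C_def by blast
    thus False unfolding f_def by auto
  qed
  have ne: "C \<noteq> {}" unfolding C_def using iD m_def by auto
  have rib: "ribbon C" unfolding ribbon_def using ne cells conn nodia by blast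
  show ?thesis unfolding ribbon_sub_def using dD dE lE sub diff rib by auto
qed


lemma profile_cases:
  assumes n1: "n \<ge> 1" and P: "is_perm n s"
  shows "(s = removeAll n s @ [n] \<and> profile s = profile (removeAll n s) @ [Up, Down]) \<or>
   (\<exists>idx. idx < length (profile (removeAll n s)) \<and> profile (removeAll n s) ! idx = Down \<and>
      profile s = (profile (removeAll n s))[idx := Up] @ [Down, Down] \<and>
      (odd (idx+1) \<longrightarrow> (\<exists>u v. removeAll n s = u @ [(idx+2) div 2] @ v \<and> s = u @ [(idx+2) div 2, n] @ v)) \<and>
      (even (idx+1) \<longrightarrow> (\<exists>u v. removeAll n s = u @ [(idx+1) div 2] @ v \<and> s = u @ [n, (idx+1) div 2] @ v)))"
proof -
  have ds: "distinct s" and ss: "set s = {1..n}" using P unfolding is_perm_def by auto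
  have ls: "length s = n"
  proof -
    have "card (set s) = length s" by (rule distinct_card[OF ds])
    thus ?thesis using ss by simp
  qed
  have "n \<in> set s" using ss n1 by auto
  then obtain u v where s: "s = u @ n # v" by (meson split_list)
  have nu: "n \<notin> set u" and nv: "n \<notin> set v" and dt: "distinct (u @ v)" using ds s by auto
  define t where "t = u @ v"
  have t: "removeAll n s = t" unfolding t_def s using nu nv by simp
  have lt: "length t = n - 1" using ls s t_def by auto
  have eu: "\<And>x. x \<in> set u \<Longrightarrow> 1 \<le> x \<and> x < n"
  proof -
    fix x assume "x \<in> set u"
    hence "x \<in> set s" "x \<noteq> n" using s nu by auto
    thus "1 \<le> x \<and> x < n" using ss by auto
  qed
  have ev: "\<And>x. x \<in> set v \<Longrightarrow> 1 \<le> x \<and> x < n"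
  proof -
    fix x assume "x \<in> set v"
    hence "x \<in> set s" "x \<noteq> n" using s nv by auto
    thus "1 \<le> x \<and> x < n" using ss by auto
  qed
  have JA: "\<And>j p q. u = p @ j # q \<Longrightarrow>
     steps_of t j = [stepc (j < (if q @ v = [] then n else hd (q @ v))), stepc (j < (if p = [] then 0 else last p))] \<and>
     steps_of s j = [stepc (j < (if q = [] then n else hd q)), stepc (j < (if p = [] then 0 else last p))]"
  proof -
    fix j p q assume u: "u = p @ j # q"
    have j: "1 \<le> j" "j < n" using eu[of j] u by auto
    have t2: "t = p @ j # (q @ v)" using u t_def by simp
    have s2: "s = p @ j # (q @ n # v)" using u s by simp
    have l1: "length (p @ j # (q @ v)) = n - 1" using t2 lt by simp
    have l2: "length (p @ j # (q @ n # v)) = n" using s2 ls by simp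
    have d1: "distinct (p @ j # (q @ v))" using dt u by simp
    have d2: "distinct (p @ j # (q @ n # v))" using ds s2 by simp
    have A0: "steps_of (p @ j # (q @ v)) j = [stepc (j < (if q @ v = [] then Suc (length (p @ j # (q @ v))) else hd (q @ v))), stepc (j < (if p = [] then 0 else last p))]"
      by (rule steps_split) (use d1 j l1 in auto)
    have sl: "Suc (length (p @ j # (q @ v))) = n" using l1 n1 by simp
    have A: "steps_of t j = [stepc (j < (if q @ v = [] then n else hd (q @ v))), stepc (j < (if p = [] then 0 else last p))]"
      using A0 unfolding sl by (simp only: t2)
    have B0: "steps_of (p @ j # (q @ n # v)) j = [stepc (j < (if q @ n # v = [] then Suc (length (p @ j # (q @ n # v))) else hd (q @ n # v))), stepc (j < (if p = [] then 0 else last p))]"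
      by (rule steps_split) (use d2 j l2 in auto)
    have hh: "hd (q @ n # v) = (if q = [] then n else hd q)" by (cases q) auto
    have B: "steps_of s j = [stepc (j < (if q = [] then n else hd q)), stepc (j < (if p = [] then 0 else last p))]"
      using B0 unfolding hh by (simp only: s2 append_is_Nil_conv list.distinct if_False simp_thms)
    show "?thesis j p q" using A B by blast
  qed
  have JB: "\<And>j p q. v = p @ j # q \<Longrightarrow>
     steps_of t j = [stepc (j < (if q = [] then n else hd q)), stepc (j < (if u @ p = [] then 0 else last (u @ p)))] \<and>
     steps_of s j = [stepc (j < (if q = [] then Suc n else hd q)), stepc (j < (if p = [] then n else last p))]"
  proof -
    fix j p q assume v: "v = p @ j # q"
    have j: "1 \<le> j" "j < n" using ev[of j] v by auto
    have t2: "t = (u @ p) @ j # q" using v t_def by simp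
    have s2: "s = (u @ n # p) @ j # q" using v s by simp
    have l1: "length ((u @ p) @ j # q) = n - 1" using t2 lt by simp
    have l2: "length ((u @ n # p) @ j # q) = n" using s2 ls by simp
    have d1: "distinct ((u @ p) @ j # q)" using dt t2 t_def by simp
    have d2: "distinct ((u @ n # p) @ j # q)" using ds s2 by simp
    have A0: "steps_of ((u @ p) @ j # q) j = [stepc (j < (if q = [] then Suc (length ((u @ p) @ j # q)) else hd q)), stepc (j < (if u @ p = [] then 0 else last (u @ p)))]"
      by (rule steps_split) (use d1 j l1 in auto)
    have sl: "Suc (length ((u @ p) @ j # q)) = n" using l1 n1 by simp
    have A: "steps_of t j = [stepc (j < (if q = [] then n else hd q)), stepc (j < (if u @ p = [] then 0 else last (u @ p)))]"
      using A0 unfolding sl by (simp only: t2)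
    have B0: "steps_of ((u @ n # p) @ j # q) j = [stepc (j < (if q = [] then Suc (length ((u @ n # p) @ j # q)) else hd q)), stepc (j < (if u @ n # p = [] then 0 else last (u @ n # p)))]"
      by (rule steps_split) (use d2 j l2 in auto)
    have ll: "last (u @ n # p) = (if p = [] then n else last p)" by (cases p rule: rev_cases) auto
    have B: "steps_of s j = [stepc (j < (if q = [] then Suc n else hd q)), stepc (j < (if p = [] then n else last p))]"
      using B0 unfolding l2 ll by (simp only: s2 append_is_Nil_conv list.distinct if_False simp_thms)
    show "?thesis j p q" using A B by blast
  qed
  have Nn: "steps_of s n = [stepc (n < (if v = [] then Suc n else hd v)), stepc (n < (if u = [] then 0 else last u))]"
  proof -
    have "steps_of (u @ n # v) n = [stepc (n < (if v = [] then Suc (length (u @ n # v)) else hd v)), stepc (n < (if u = [] then 0 else last u))]"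
      by (rule steps_split) (use s ds ls n1 in auto)
    thus ?thesis unfolding s[symmetric] ls .
  qed
  have ps: "profile s = concat (map (steps_of s) [1..<n]) @ steps_of s n"
    unfolding profile_def ls using n1 by simp
  have pt: "profile t = concat (map (steps_of t) [1..<n])"
    unfolding profile_def lt using n1 by simp
  have lpt: "length (profile t) = 2 * (n - 1)" using length_profile lt by simp
  have inset: "\<And>j. 1 \<le> j \<Longrightarrow> j < n \<Longrightarrow> j \<in> set u \<or> j \<in> set v" using ss s by auto
  show ?thesis
  proof (cases "v = []")
    case True
    have same: "\<And>j. j \<in> set [1..<n] \<Longrightarrow> steps_of s j = steps_of t j"
    proof -
      fix j assume "j \<in> set [1..<n]"
      hence "j \<in> set u" using inset True by auto
      then obtain p q where "u = p @ j # q" by (meson split_list)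
      thus "steps_of s j = steps_of t j" using JA True by auto
    qed
    have me: "map (steps_of s) [1..<n] = map (steps_of t) [1..<n]" by (rule map_cong[OF refl]) (rule same)
    have sn: "steps_of s n = [Up, Down]" using Nn True eu[of "last u"] by (auto simp: stepc_def)
    have "profile s = profile t @ [Up, Down]" unfolding ps pt me sn ..
    moreover have "s = t @ [n]" using s True t_def by simp
    ultimately show ?thesis using t by auto
  next
    case False
    then obtain b v' where v: "v = b # v'" by (cases v) auto
    have b: "1 \<le> b" "b < n" using ev v by auto
    have bu: "b \<notin> set u" using dt v by auto
    show ?thesis
    proof (cases "u \<noteq> [] \<and> b < last u")
      case True
      then obtain u' a where u: "u = u' @ [a]" and ab: "b < a" by (metis append_butlast_last_id)
      have a: "1 \<le> a" "a < n" using eu u by auto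
      have same: "\<And>j. 1 \<le> j \<Longrightarrow> j \<le> n - 1 \<Longrightarrow> j \<noteq> a \<Longrightarrow> steps_of s j = steps_of t j"
      proof -
        fix j assume j: "1 \<le> j" "j \<le> n - 1" "j \<noteq> a"
        hence "j \<in> set u \<or> j \<in> set v" using inset by auto
        thus "steps_of s j = steps_of t j"
        proof
          assume "j \<in> set u"
          then obtain p q where pq: "u = p @ j # q" by (meson split_list)
          have "q \<noteq> []" using pq u j(3) by auto
          thus ?thesis using JA[OF pq] by (cases q) auto
        next
          assume "j \<in> set v"
          then obtain p q where pq: "v = p @ j # q" by (meson split_list)
          have jn: "j < n" using ev pq by auto
          have R: "stepc (j < (if q = [] then n else hd q)) = stepc (j < (if q = [] then Suc n else hd q))"
            using jn by auto
          have L: "stepc (j < (if u @ p = [] then 0 else last (u @ p))) = stepc (j < (if p = [] then n else last p))"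
          proof (cases "p = []")
            case True
            hence "j = b" using pq v by auto
            thus ?thesis using True u ab jn by (auto simp: stepc_def)
          next
            case False thus ?thesis by auto
          qed
          show ?thesis using JB[OF pq] R L by auto
        qed
      qed
      have fa: "steps_of s a = (steps_of t a)[0 := Up]" and ta: "steps_of t a ! 0 = Down"
        using JA[of u' a "[]"] u v ab a by (auto simp: stepc_def)
      have nn: "n - 1 + 1 = n" using n1 by simp
      have CU: "concat (map (steps_of s) [1..<n]) = (profile t)[2*(a-1) := Up] \<and> profile t ! (2*(a-1)) = Down"
        using concat_upd[of a "n - 1" 0 "steps_of t" "steps_of s" Up] a same fa ta pt nn by auto
      have sn: "steps_of s n = [Down, Down]" using Nn v b u a by (auto simp: stepc_def)
      have "profile s = (profile t)[2*(a-1) := Up] @ [Down, Down]" using ps CU sn by simp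
      moreover have "2*(a-1) < length (profile t)" using lpt a by auto
      moreover have "odd (2*(a-1)+1)" by simp
      moreover have "(2*(a-1)+2) div 2 = a" using a by auto
      moreover have "t = u' @ [a] @ v \<and> s = u' @ [a, n] @ v" using t_def s u by simp
      ultimately show ?thesis using t CU by (metis even_add odd_one)
    next
      case False
      have au: "u \<noteq> [] \<Longrightarrow> last u < b"
        using False bu by (metis last_in_set linorder_neqE_nat)
      have same: "\<And>j. 1 \<le> j \<Longrightarrow> j \<le> n - 1 \<Longrightarrow> j \<noteq> b \<Longrightarrow> steps_of s j = steps_of t j"
      proof -
        fix j assume j: "1 \<le> j" "j \<le> n - 1" "j \<noteq> b"
        hence "j \<in> set u \<or> j \<in> set v" using inset by auto
        thus "steps_of s j = steps_of t j"
        proof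
          assume "j \<in> set u"
          then obtain p q where pq: "u = p @ j # q" by (meson split_list)
          have jn: "j < n" using eu pq by auto
          show ?thesis
          proof (cases "q = []")
            case True
            hence "j < b" using au pq by auto
            thus ?thesis using JA[OF pq] True v jn by (auto simp: stepc_def)
          next
            case False thus ?thesis using JA[OF pq] by (cases q) auto
          qed
        next
          assume "j \<in> set v"
          then obtain p q where pq: "v = p @ j # q" by (meson split_list)
          have jn: "j < n" using ev pq by auto
          have "p \<noteq> []" using pq v j(3) by auto
          hence L: "stepc (j < (if u @ p = [] then 0 else last (u @ p))) = stepc (j < (if p = [] then n else last p))"
            by auto
          have R: "stepc (j < (if q = [] then n else hd q)) = stepc (j < (if q = [] then Suc n else hd q))"
            using jn by auto
          show ?thesis using JB[OF pq] R L by auto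
        qed
      qed
      have fb0: "steps_of s b = [stepc (b < (if v' = [] then Suc n else hd v')), Up]"
        and tb0: "steps_of t b = [stepc (b < (if v' = [] then n else hd v')), Down]"
        using JB[of "[]" b v'] v b au by (auto simp: stepc_def)
      have fb: "steps_of s b = (steps_of t b)[1 := Up]" using fb0 tb0 b by auto
      have tb: "steps_of t b ! 1 = Down" using tb0 by simp
      have nn: "n - 1 + 1 = n" using n1 by simp
      have CU: "concat (map (steps_of s) [1..<n]) = (profile t)[2*(b-1)+1 := Up] \<and> profile t ! (2*(b-1)+1) = Down"
        using concat_upd[of b "n - 1" 1 "steps_of t" "steps_of s" Up] b same fb tb pt nn by auto
      have sn: "steps_of s n = [Down, Down]" using Nn v b au eu by (auto simp: stepc_def)
      have "profile s = (profile t)[2*(b-1)+1 := Up] @ [Down, Down]" using ps CU sn by simp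
      moreover have "2*(b-1)+1 < length (profile t)" using lpt b by auto
      moreover have "even (2*(b-1)+1+1)" by simp
      moreover have "(2*(b-1)+1+1) div 2 = b" using b by auto
      moreover have "t = u @ [b] @ v' \<and> s = u @ [n, b] @ v'" using t_def s v by simp
      ultimately show ?thesis using t CU by (metis even_add odd_one)
    qed
  qed
qed


lemma sum_list_upd_int: "i < length xs \<Longrightarrow> sum_list ((xs::int list)[i := y]) = sum_list xs + y - xs ! i"
  by (induction xs arbitrary: i) (auto split: nat.splits)

lemma hgt_append: "hgt (A @ B) x = hgt A x + hgt B (x - length A)"
  by (simp add: hgt_def)

lemma hgt_upd:
  assumes "i < length D" "D ! i = Down"
  shows "hgt (D[i := Up]) x = hgt D x + (if i < x then 2 else 0)"
proof (cases "i < x")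
  case True
  have "take x (D[i := Up]) = (take x D)[i := Up]" by (rule take_update_swap)
  hence "hgt (D[i := Up]) x = sum_list ((map step_val (take x D))[i := 1])"
    unfolding hgt_def by (simp add: map_update step_val_def)
  also have "\<dots> = hgt D x + 1 - map step_val (take x D) ! i"
    using True assms by (subst sum_list_upd_int) (auto simp: hgt_def)
  also have "map step_val (take x D) ! i = -1" using True assms by (simp add: step_val_def)
  finally show ?thesis using True by simp
next
  case False thus ?thesis by (simp add: hgt_def)
qed

lemma key:
  fixes n :: nat and s :: "nat list"
  assumes n1: "n \<ge> 1" and P: "is_perm n s" and dD: "dyck (profile (removeAll n s))"
  shows "ribbon_sub (profile (removeAll n s)) (profile s) \<and>
    (prefix (profile (removeAll n s)) (profile s) \<longrightarrow> s = removeAll n s @ [n]) \<and>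
    (\<not> prefix (profile (removeAll n s)) (profile s) \<longrightarrow>
       (let k = first_diff (profile (removeAll n s)) (profile s) in
         (odd k \<longrightarrow> (\<exists>u v. removeAll n s = u @ [(k + 1) div 2] @ v \<and> s = u @ [(k + 1) div 2, n] @ v)) \<and>
         (even k \<longrightarrow> (\<exists>u v. removeAll n s = u @ [k div 2] @ v \<and> s = u @ [n, k div 2] @ v))))"
proof -
  define D where "D = profile (removeAll n s)"
  define E where "E = profile s"
  have z: "hgt D (length D) = 0" using dD unfolding D_def[symmetric] dyck_def height_nat by auto
  note pc = profile_cases[OF n1 P, folded D_def E_def]
  show ?thesis unfolding D_def[symmetric] E_def[symmetric]
  proof (cases "s = removeAll n s @ [n] \<and> E = D @ [Up, Down]")
    case True
    hence E: "E = D @ [Up, Down]" by simp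
    have rs: "ribbon_sub D E"
    proof (rule abstract[of D E "length D"])
      show "dyck D" using dD D_def by simp
      show "length E = length D + 2" using E by simp
    qed (use E z in \<open>auto simp: hgt_append hgt_def step_val_def\<close>)
    have "prefix D E" using E by simp
    thus "ribbon_sub D E \<and> (prefix D E \<longrightarrow> s = removeAll n s @ [n]) \<and>
      (\<not> prefix D E \<longrightarrow> (let k = first_diff D E in
         (odd k \<longrightarrow> (\<exists>u v. removeAll n s = u @ [(k + 1) div 2] @ v \<and> s = u @ [(k + 1) div 2, n] @ v)) \<and>
         (even k \<longrightarrow> (\<exists>u v. removeAll n s = u @ [k div 2] @ v \<and> s = u @ [n, k div 2] @ v))))"
      using rs True by auto
  next
    case False
    then obtain idx where il: "idx < length D" and dI: "D ! idx = Down"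
      and E: "E = D[idx := Up] @ [Down, Down]"
      and od: "odd (idx+1) \<longrightarrow> (\<exists>u v. removeAll n s = u @ [(idx+2) div 2] @ v \<and> s = u @ [(idx+2) div 2, n] @ v)"
      and evn: "even (idx+1) \<longrightarrow> (\<exists>u v. removeAll n s = u @ [(idx+1) div 2] @ v \<and> s = u @ [n, (idx+1) div 2] @ v)"
      using pc by blast
    have lE: "length E = length D + 2" using E by simp
    have rs: "ribbon_sub D E"
    proof (rule abstract[of D E idx])
      show "dyck D" using dD D_def by simp
      show "length E = length D + 2" using lE .
      show "idx \<le> length D" using il by simp
      show "\<And>x. x \<le> idx \<Longrightarrow> hgt E x = hgt D x"
        using il by (simp add: E hgt_append hgt_upd[OF il dI]) (simp add: hgt_def)
      show "\<And>x. idx < x \<Longrightarrow> x \<le> length D \<Longrightarrow> hgt E x = hgt D x + 2"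
        by (simp add: E hgt_append hgt_upd[OF il dI]) (simp add: hgt_def)
      show "hgt E (Suc (length D)) = 1"
        using il z by (simp add: E hgt_append hgt_upd[OF il dI]) (simp add: hgt_def step_val_def)
      show "hgt E (Suc (Suc (length D))) = 0"
        using il z by (simp add: E hgt_append hgt_upd[OF il dI]) (simp add: hgt_def step_val_def)
    qed
    have EI: "E ! idx = Up" using E il by (simp add: nth_append)
    have eqb: "\<And>j. j < idx \<Longrightarrow> E ! j = D ! j" using E il by (simp add: nth_append)
    have np: "\<not> prefix D E"
    proof
      assume "prefix D E"
      then obtain zs where "E = D @ zs" by (auto simp: prefix_def)
      hence "E ! idx = D ! idx" using il by (simp add: nth_append)
      thus False using EI dI by simp
    qed
    have fd: "first_diff D E = Suc idx"
      unfolding first_diff_def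
    proof (rule Least_equality)
      show "1 \<le> Suc idx \<and> Suc idx \<le> length D \<and> Suc idx \<le> length E \<and> D ! (Suc idx - 1) \<noteq> E ! (Suc idx - 1)"
        using il lE EI dI by auto
    next
      fix y assume y: "1 \<le> y \<and> y \<le> length D \<and> y \<le> length E \<and> D ! (y - 1) \<noteq> E ! (y - 1)"
      show "Suc idx \<le> y"
      proof (rule ccontr)
        assume "\<not> Suc idx \<le> y"
        hence "y - 1 < idx" using y by auto
        thus False using eqb y by metis
      qed
    qed
    have k1: "(Suc idx + 1) div 2 = (idx + 2) div 2" and k2: "Suc idx div 2 = (idx + 1) div 2" by simp_all
    show "ribbon_sub D E \<and> (prefix D E \<longrightarrow> s = removeAll n s @ [n]) \<and>
      (\<not> prefix D E \<longrightarrow> (let k = first_diff D E in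
         (odd k \<longrightarrow> (\<exists>u v. removeAll n s = u @ [(k + 1) div 2] @ v \<and> s = u @ [(k + 1) div 2, n] @ v)) \<and>
         (even k \<longrightarrow> (\<exists>u v. removeAll n s = u @ [k div 2] @ v \<and> s = u @ [n, k div 2] @ v))))"
      unfolding fd Let_def k1 k2 using rs np od evn by simp
  qed
qed

lemma dyck_profile: "is_perm n s \<Longrightarrow> dyck (profile s)"
proof (induction n arbitrary: s)
  case 0
  hence "s = []" unfolding is_perm_def by auto
  thus ?case by (simp add: profile_def dyck_def height_def)
next
  case (Suc n)
  have "is_perm n (removeAll (Suc n) s)"
    using Suc.prems unfolding is_perm_def by (auto simp: distinct_removeAll)
  hence "dyck (profile (removeAll (Suc n) s))" using Suc.IH by blast
  hence "ribbon_sub (profile (removeAll (Suc n) s)) (profile s)" using key[of "Suc n" s] Suc.prems by simp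
  thus ?case unfolding ribbon_sub_def by simp
qed

theorem mainTheorem6:
  fixes n :: nat and s :: "nat list"
  assumes "n \<ge> 1" and "is_perm n s"
  shows "ribbon_sub (profile (removeAll n s)) (profile s) \<and>
    (prefix (profile (removeAll n s)) (profile s) \<longrightarrow> s = removeAll n s @ [n]) \<and>
    (\<not> prefix (profile (removeAll n s)) (profile s) \<longrightarrow>
       (let k = first_diff (profile (removeAll n s)) (profile s) in
         (odd k \<longrightarrow> (\<exists>u v. removeAll n s = u @ [(k + 1) div 2] @ v \<and> s = u @ [(k + 1) div 2, n] @ v)) \<and>
         (even k \<longrightarrow> (\<exists>u v. removeAll n s = u @ [k div 2] @ v \<and> s = u @ [n, k div 2] @ v))))"
proof -
  have "is_perm (n - 1) (removeAll n s)"
    using assms unfolding is_perm_def by (auto simp: distinct_removeAll)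
  hence "dyck (profile (removeAll n s))" by (rule dyck_profile)
  thus ?thesis using key assms by blast
qed

end
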